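(* Let $m\ge 2$ and $N\ge 1$ be integers, let $J_1,\dots,J_{m-1}\in\{1,-1\}$, and let $\zeta^-_1,\dots,\zeta^-_{m-1}\in\mathcal{P}_N^-$ and $f^+\in\mathcal{P}_N^+$ with $f^+(0)\neq 0$. Consider the system of conditions, for an unknown vector $(x_1,\dots,x_m)^T$ of functions on $\mathbb{T}$, \[ \begin{cases} \zeta^-_k\,x_m - J_k\, f^+\,\widetilde{x_k}\in\mathcal{P}^+, & k=1,\dots,m-1,\\ \zeta^-_1x_1+\zeta^-_2x_2+\dots+\zeta^-_{m-1}x_{m-1}+f^+\,\widetilde{x_m}\in\mathcal{P}^+. \end{cases} \] Let $\mathbf{u}=(u_1,\dots,u_m)^T\in(\mathcal{P}_N^+)^{m\times 1}$ and $\mathbf{v}=(v_1,\dots,v_m)^T\in(\mathcal{P}_N^+)^{m\times 1}$ be two (possibly identical) solutions of this system, i.e. all conditions hold when $x_i=u_i$ for all $i$, and also when $x_i=v_i$ for all $i$. Then \[ \sum_{k=1}^{m-1}J_k\,u_k\,\widetilde{v_k}+\widetilde{u_m}\,v_m \] is a constant function on $\mathbb{T}$.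
   Context: $\mathbb{T}=\{z\in\mathbb{C}:|z|=1\}$. $\mathcal{P}$ denotes the set of Laurent polynomials $P(z)=\sum_{k=-n}^{m}p_kz^k$ (with complex coefficients, viewed as functions on $\mathbb{T}$), and $\mathcal{P}^+$ the set of (ordinary) polynomials $\sum_{k\ge 0}p_kz^k$. $\mathcal{P}_N$ is the set of Laurent polynomials $\sum_{k=-n}^{m}p_kz^k$ with $0\le n,m\le N$, and $\mathcal{P}_N^+=\mathcal{P}_N\cap\mathcal{P}^+$. For $P(z)=\sum_{k=-n}^m p_kz^k$, $\widetilde{P}(z)=\sum_{k=-n}^m\overline{p_k}z^{-k}$ (so $\widetilde{P}(z)=\overline{P(z)}$ for $z\in\mathbb{T}$). $\mathcal{P}_N^-=\{P:\widetilde{P}\in\mathcal{P}_N^+\}$. *)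

theory Defs
  imports Complex_Main
begin

text \<open>Laurent polynomials are viewed as functions on the unit circle T:
  a function f :: complex => complex is identified with its restriction to T.\<close>

definition circle :: "complex set" where
  "circle = {z. norm z = 1}"

definition LaurentN :: "nat \<Rightarrow> (complex \<Rightarrow> complex) set" where
  "LaurentN N = {f. \<exists>n m p. n \<le> N \<and> m \<le> N \<and>
      (\<forall>z\<in>circle. f z = (\<Sum>k\<in>{-int n..int m}. p k * z powi k))}"

definition Pplus :: "(complex \<Rightarrow> complex) set" where
  "Pplus = {f. \<exists>m p. \<forall>z\<in>circle. f z = (\<Sum>k\<le>m. p k * z ^ k)}"

definition PplusN :: "nat \<Rightarrow> (complex \<Rightarrow> complex) set" where
  "PplusN N = LaurentN N \<inter> Pplus"

text \<open>tilde P: on T it equals the complex conjugate of P.\<close>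
definition tilde :: "(complex \<Rightarrow> complex) \<Rightarrow> complex \<Rightarrow> complex" where
  "tilde f = (\<lambda>z. cnj (f z))"

definition PminusN :: "nat \<Rightarrow> (complex \<Rightarrow> complex) set" where
  "PminusN N = {f. tilde f \<in> PplusN N}"

text \<open>For a polynomial f in P^+, the value f(0) is its constant coefficient.\<close>
definition poly_at_zero_nonzero :: "(complex \<Rightarrow> complex) \<Rightarrow> bool" where
  "poly_at_zero_nonzero f \<longleftrightarrow>
     (\<exists>m p. (\<forall>z\<in>circle. f z = (\<Sum>k\<le>m. p k * z ^ k)) \<and> p 0 \<noteq> 0)"

definition is_solution ::
  "nat \<Rightarrow> (nat \<Rightarrow> int) \<Rightarrow> (nat \<Rightarrow> complex \<Rightarrow> complex) \<Rightarrow> (complex \<Rightarrow> complex)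
     \<Rightarrow> (nat \<Rightarrow> complex \<Rightarrow> complex) \<Rightarrow> bool" where
  "is_solution m J \<zeta> f x \<longleftrightarrow>
     (\<forall>k\<in>{1..m-1}. (\<lambda>z. \<zeta> k z * x m z - of_int (J k) * f z * tilde (x k) z) \<in> Pplus) \<and>
     (\<lambda>z. (\<Sum>k=1..m-1. \<zeta> k z * x k z) + f z * tilde (x m) z) \<in> Pplus"

end

theory Submission
  imports Defs "HOL-Computational_Algebra.Polynomial"
begin

lemma Pplus_iff: "g \<in> Pplus \<longleftrightarrow> (\<exists>P. \<forall>z\<in>circle. g z = poly P z)"
proof
  assume "g \<in> Pplus"
  then obtain m p where h: "\<forall>z\<in>circle. g z = (\<Sum>k\<le>m. p k * z ^ k)" by (auto simp: Pplus_def)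
  have "\<forall>z\<in>circle. g z = poly (\<Sum>k\<le>m. monom (p k) k) z"
    using h by (simp add: poly_sum poly_monom)
  then show "\<exists>P. \<forall>z\<in>circle. g z = poly P z" by blast
next
  assume "\<exists>P. \<forall>z\<in>circle. g z = poly P z"
  then obtain P where "\<forall>z\<in>circle. g z = poly P z" by blast
  then have "\<forall>z\<in>circle. g z = (\<Sum>k\<le>degree P. coeff P k * z ^ k)"
    by (simp add: poly_altdef)
  then show "g \<in> Pplus" unfolding Pplus_def by blast
qed

lemma circle_infinite: "infinite circle"
proof
  assume fin: "finite circle"
  define h where "h = (\<lambda>x::real. Complex x (sqrt (1 - x^2)))"
  have "h ` {0..1} \<subseteq> circle"
  proof
    fix w assume "w \<in> h ` {0..1}"
    then obtain x where x: "x \<in> {0..1}" "w = h x" by auto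
    have "x^2 \<le> 1" using x by (simp add: power_le_one)
    then show "w \<in> circle" using x
      by (simp add: circle_def h_def norm_complex_def)
  qed
  moreover have "inj_on h {0..1}" by (auto simp: inj_on_def h_def)
  ultimately have "finite {0..1::real}"
    using fin finite_subset finite_imageD by metis
  then show False using infinite_Icc[of "0::real" 1] by simp
qed

lemma poly_eq_circle:
  assumes "\<forall>z\<in>circle. poly P z = poly Q z"
  shows "P = Q"
proof (rule ccontr)
  assume "P \<noteq> Q"
  then have "P - Q \<noteq> 0" by simp
  then have "finite {x. poly (P - Q) x = 0}" by (rule poly_roots_finite)
  moreover have "circle \<subseteq> {x. poly (P - Q) x = 0}" using assms by auto
  ultimately show False using circle_infinite finite_subset by blast
qed

lemma circle_nz: "z \<in> circle \<Longrightarrow> z \<noteq> 0"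
  by (auto simp: circle_def)

lemma Pplus_add: "g \<in> Pplus \<Longrightarrow> h \<in> Pplus \<Longrightarrow> (\<lambda>z. g z + h z) \<in> Pplus"
  unfolding Pplus_iff by (metis poly_add)
lemma Pplus_diff: "g \<in> Pplus \<Longrightarrow> h \<in> Pplus \<Longrightarrow> (\<lambda>z. g z - h z) \<in> Pplus"
  unfolding Pplus_iff by (metis poly_diff)
lemma Pplus_mult: "g \<in> Pplus \<Longrightarrow> h \<in> Pplus \<Longrightarrow> (\<lambda>z. g z * h z) \<in> Pplus"
  unfolding Pplus_iff by (metis poly_mult)
lemma Pplus_zero: "(\<lambda>z. 0) \<in> Pplus"
  unfolding Pplus_iff by (metis poly_0)

lemma Pplus_sum: "finite A \<Longrightarrow> (\<forall>a\<in>A. g a \<in> Pplus) \<Longrightarrow> (\<lambda>z. \<Sum>a\<in>A. g a z) \<in> Pplus"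
proof (induction A rule: finite_induct)
  case empty then show ?case by (simp add: Pplus_zero)
next
  case (insert x F)
  then show ?case using Pplus_add[of "g x" "\<lambda>z. \<Sum>a\<in>F. g a z"] by simp
qed

definition lpoly :: "(complex \<Rightarrow> complex) \<Rightarrow> bool" where
  "lpoly g \<longleftrightarrow> (\<exists>M T. \<forall>z\<in>circle. z^M * g z = poly T z)"

lemma lpoly_add: "lpoly g \<Longrightarrow> lpoly h \<Longrightarrow> lpoly (\<lambda>z. g z + h z)"
proof -
  assume "lpoly g" "lpoly h"
  then obtain M1 T1 M2 T2 where a: "\<forall>z\<in>circle. z^M1 * g z = poly T1 z"
    and b: "\<forall>z\<in>circle. z^M2 * h z = poly T2 z" by (auto simp: lpoly_def)
  have "\<forall>z\<in>circle. z^(M1+M2) * (g z + h z) = poly ([:0,1:]^M2 * T1 + [:0,1:]^M1 * T2) z"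
  proof
    fix z assume z: "z \<in> circle"
    have "z^(M1+M2) * (g z + h z) = z^M2 * (z^M1 * g z) + z^M1 * (z^M2 * h z)"
      by (simp add: algebra_simps power_add)
    also have "\<dots> = poly ([:0,1:]^M2 * T1 + [:0,1:]^M1 * T2) z"
      using a b z by (simp add: poly_power)
    finally show "z^(M1+M2) * (g z + h z) = poly ([:0,1:]^M2 * T1 + [:0,1:]^M1 * T2) z" .
  qed
  then show ?thesis unfolding lpoly_def by blast
qed

lemma lpoly_mult: "lpoly g \<Longrightarrow> lpoly h \<Longrightarrow> lpoly (\<lambda>z. g z * h z)"
proof -
  assume "lpoly g" "lpoly h"
  then obtain M1 T1 M2 T2 where a: "\<forall>z\<in>circle. z^M1 * g z = poly T1 z"
    and b: "\<forall>z\<in>circle. z^M2 * h z = poly T2 z" by (auto simp: lpoly_def)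
  have "\<forall>z\<in>circle. z^(M1+M2) * (g z * h z) = poly (T1 * T2) z"
  proof
    fix z assume z: "z \<in> circle"
    have "z^(M1+M2) * (g z * h z) = (z^M1 * g z) * (z^M2 * h z)"
      by (simp add: algebra_simps power_add)
    then show "z^(M1+M2) * (g z * h z) = poly (T1 * T2) z"
      using a b z by simp
  qed
  then show ?thesis unfolding lpoly_def by blast
qed

lemma lpoly_zero: "lpoly (\<lambda>z. 0)"
  unfolding lpoly_def by (rule exI[of _ 0], rule exI[of _ 0]) simp

lemma lpoly_const: "lpoly (\<lambda>z. c)"
  unfolding lpoly_def by (rule exI[of _ 0], rule exI[of _ "[:c:]"]) simp

lemma lpoly_sum: "finite A \<Longrightarrow> (\<forall>a\<in>A. lpoly (g a)) \<Longrightarrow> lpoly (\<lambda>z. \<Sum>a\<in>A. g a z)"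
proof (induction A rule: finite_induct)
  case empty then show ?case by (simp add: lpoly_zero)
next
  case (insert x F)
  then show ?case using lpoly_add[of "g x" "\<lambda>z. \<Sum>a\<in>F. g a z"] by simp
qed

lemma lpoly_Pplus: "g \<in> Pplus \<Longrightarrow> lpoly g"
  unfolding Pplus_iff lpoly_def by (metis power_0 mult_1)

lemma cnj_circle: "z \<in> circle \<Longrightarrow> z * cnj z = 1"
proof -
  assume "z \<in> circle"
  then have "norm z = 1" by (simp add: circle_def)
  then show ?thesis using complex_norm_square[of z] by simp
qed

lemma cnj_poly_rep:
  "\<exists>d T. (\<forall>z\<in>circle. z^d * cnj (poly B z) = poly T z) \<and> (\<forall>k>d. coeff T k = 0)"
proof -
  define d where "d = degree B"
  define T where "T = (\<Sum>i\<le>d. monom (cnj (coeff B i)) (d - i))"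
  have "\<forall>z\<in>circle. z^d * cnj (poly B z) = poly T z"
  proof
    fix z assume z: "z \<in> circle"
    have "z^d * cnj (poly B z) = (\<Sum>i\<le>d. cnj (coeff B i) * (z^d * cnj z ^ i))"
      by (simp add: poly_altdef d_def sum_distrib_left algebra_simps)
    also have "\<dots> = (\<Sum>i\<le>d. cnj (coeff B i) * z^(d-i))"
    proof (rule sum.cong)
      fix i assume "i \<in> {..d}"
      then have "z^d = z^(d-i) * z^i" by (simp add: power_add[symmetric])
      then have "z^d * cnj z ^ i = z^(d-i) * (z * cnj z)^i" by (simp add: power_mult_distrib)
      then show "cnj (coeff B i) * (z^d * cnj z ^ i) = cnj (coeff B i) * z^(d-i)"
        using cnj_circle[OF z] by simp
    qed simp
    also have "\<dots> = poly T z" by (simp add: T_def poly_sum poly_monom)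
    finally show "z^d * cnj (poly B z) = poly T z" .
  qed
  moreover have "\<forall>k>d. coeff T k = 0"
    by (auto simp: T_def coeff_sum coeff_monom intro!: sum.neutral)
  ultimately show ?thesis by blast
qed

lemma lpoly_cnj: "g \<in> Pplus \<Longrightarrow> lpoly (\<lambda>z. cnj (g z))"
proof -
  assume "g \<in> Pplus"
  then obtain B where B: "\<forall>z\<in>circle. g z = poly B z" by (auto simp: Pplus_iff)
  obtain d T where "\<forall>z\<in>circle. z^d * cnj (poly B z) = poly T z"
    using cnj_poly_rep by blast
  then show ?thesis unfolding lpoly_def using B by auto
qed

lemma core:
  assumes "\<forall>z\<in>circle. z^M * S z = poly T z" "\<forall>z\<in>circle. f z = poly F z" "poly F 0 \<noteq> 0"
    "\<forall>z\<in>circle. f z * S z = poly P z"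
  shows "\<exists>R. \<forall>z\<in>circle. S z = poly R z"
proof (cases "T = 0")
  case True
  then show ?thesis using assms(1) circle_nz by (metis mult_eq_0_iff poly_0 power_eq_0_iff)
next
  case False
  have F: "F \<noteq> 0" using assms(3) by auto
  have eq: "F * T = [:0,1:]^M * P"
    by (rule poly_eq_circle) (use assms in \<open>simp add: poly_power\<close>, metis mult.left_commute)
  have "[:-0,1:]^M dvd F * T" unfolding eq by simp
  moreover have "F * T \<noteq> 0" using F False by simp
  ultimately have "M \<le> order 0 (F * T)" using order_divides[of 0 M "F * T"] by simp
  also have "\<dots> = order 0 T" using order_mult[OF \<open>F * T \<noteq> 0\<close>] order_root[of F 0] assms(3) by simp
  finally have "[:-0,1:]^M dvd T" using order_divides[of 0 M T] by simp
  then obtain R where R: "T = [:0,1:]^M * R" by auto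
  have "\<forall>z\<in>circle. S z = poly R z"
  proof
    fix z assume z: "z \<in> circle"
    then have "z^M * S z = z^M * poly R z" using assms(1) R by (simp add: poly_power)
    then show "S z = poly R z" using circle_nz[OF z] by simp
  qed
  then show ?thesis by blast
qed

lemma final:
  assumes "\<forall>z\<in>circle. S z = poly A z" "\<forall>z\<in>circle. cnj (S z) = poly B z"
  shows "\<exists>c. \<forall>z\<in>circle. S z = c"
proof -
  obtain d T where T: "\<forall>z\<in>circle. z^d * cnj (poly B z) = poly T z" and Tc: "\<forall>k>d. coeff T k = 0"
    using cnj_poly_rep by blast
  have eq: "[:0,1:]^d * A = T"
  proof (rule poly_eq_circle, intro ballI)
    fix z assume z: "z \<in> circle"
    have "cnj (poly B z) = poly A z" using assms z by (metis complex_cnj_cnj)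
    moreover have "poly T z = z^d * cnj (poly B z)" using T z by simp
    ultimately show "poly ([:0,1:]^d * A) z = poly T z" by (simp add: poly_power)
  qed
  have "\<forall>j>0. coeff A j = 0"
  proof (intro allI impI)
    fix j :: nat assume "j > 0"
    have xm: "[:0,1:]^d = (monom 1 d :: complex poly)"
      by (rule poly_eq_circle) (simp add: poly_power poly_monom)
    have "coeff ([:0,1:]^d * A) (d + j) = coeff A j"
      using coeff_monom_mult[of 1 d A "d+j"] by (simp add: xm)
    then show "coeff A j = 0" using eq Tc \<open>j > 0\<close> by simp
  qed
  then have "A = [:coeff A 0:]"
    by (intro poly_eqI) (simp add: coeff_pCons split: nat.split)
  then have "\<forall>z. poly A z = coeff A 0"
    by (metis poly_pCons poly_0 mult_zero_right add_0_right)
  then show ?thesis using assms(1) by auto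
qed

definition SS :: "nat \<Rightarrow> (nat \<Rightarrow> int) \<Rightarrow> (nat \<Rightarrow> complex \<Rightarrow> complex) \<Rightarrow> (nat \<Rightarrow> complex \<Rightarrow> complex) \<Rightarrow> complex \<Rightarrow> complex" where
  "SS m J x y = (\<lambda>z. (\<Sum>k=1..m-1. of_int (J k) * x k z * cnj (y k z)) + cnj (x m z) * y m z)"

lemma fS_Pplus:
  assumes m: "m \<ge> 1" and x: "\<forall>i\<in>{1..m}. x i \<in> Pplus" and y: "\<forall>i\<in>{1..m}. y i \<in> Pplus"
    and sx: "is_solution m J \<zeta> f x" and sy: "is_solution m J \<zeta> f y"
  shows "(\<lambda>z. f z * SS m J x y z) \<in> Pplus"
proof -
  define Bx where "Bx = (\<lambda>z. (\<Sum>k=1..m-1. \<zeta> k z * x k z) + f z * cnj (x m z))"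
  define A where "A = (\<lambda>k z. \<zeta> k z * y m z - of_int (J k) * f z * cnj (y k z))"
  have hB: "Bx \<in> Pplus" using sx by (simp add: is_solution_def Bx_def tilde_def)
  have hA: "\<forall>k\<in>{1..m-1}. A k \<in> Pplus" using sy by (simp add: is_solution_def A_def tilde_def)
  have ym: "y m \<in> Pplus" using y m by auto
  have "(\<lambda>z. \<Sum>k\<in>{1..m-1}. x k z * A k z) \<in> Pplus"
    by (rule Pplus_sum) (use x hA in \<open>auto intro!: Pplus_mult\<close>)
  then have G: "(\<lambda>z. y m z * Bx z - (\<Sum>k\<in>{1..m-1}. x k z * A k z)) \<in> Pplus"
    using hB ym by (intro Pplus_diff Pplus_mult)
  have "(\<lambda>z. f z * SS m J x y z) = (\<lambda>z. y m z * Bx z - (\<Sum>k\<in>{1..m-1}. x k z * A k z))"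
  proof
    fix z
    have "(\<Sum>k\<in>{1..m-1}. x k z * A k z) = y m z * (\<Sum>k=1..m-1. \<zeta> k z * x k z)
       - (\<Sum>k=1..m-1. f z * (of_int (J k) * x k z * cnj (y k z)))"
      by (simp add: A_def sum_distrib_left sum_subtractf[symmetric] algebra_simps)
    then show "f z * SS m J x y z = y m z * Bx z - (\<Sum>k\<in>{1..m-1}. x k z * A k z)"
      by (simp add: SS_def Bx_def sum_distrib_left algebra_simps)
  qed
  then show ?thesis using G by simp
qed

lemma lpoly_S:
  assumes m: "m \<ge> 1" and x: "\<forall>i\<in>{1..m}. x i \<in> Pplus" and y: "\<forall>i\<in>{1..m}. y i \<in> Pplus"
  shows "lpoly (SS m J x y)"
proof -
  have "lpoly (\<lambda>z. \<Sum>k\<in>{1..m-1}. of_int (J k) * x k z * cnj (y k z))"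
  proof (rule lpoly_sum[OF finite_atLeastAtMost], intro ballI)
    fix k assume k: "k \<in> {1..m-1}"
    then have "x k \<in> Pplus" "y k \<in> Pplus" using x y by auto
    then show "lpoly (\<lambda>z. of_int (J k) * x k z * cnj (y k z))"
      by (intro lpoly_mult lpoly_const lpoly_Pplus lpoly_cnj)
  qed
  moreover have "lpoly (\<lambda>z. cnj (x m z) * y m z)"
  proof -
    have "x m \<in> Pplus" "y m \<in> Pplus" using x y m by auto
    then show ?thesis by (intro lpoly_mult lpoly_Pplus lpoly_cnj)
  qed
  ultimately show ?thesis unfolding SS_def by (rule lpoly_add)
qed

lemma SS_sym: "SS m J y x z = cnj (SS m J x y z)"
  by (simp add: SS_def cnj_sum mult.commute mult.left_commute)

theorem lemma1:
  fixes m N :: nat and J :: "nat \<Rightarrow> int"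
    and \<zeta> :: "nat \<Rightarrow> complex \<Rightarrow> complex" and f :: "complex \<Rightarrow> complex"
    and u v :: "nat \<Rightarrow> complex \<Rightarrow> complex"
  assumes "m \<ge> 2" and "N \<ge> 1"
    and "\<forall>k\<in>{1..m-1}. J k = 1 \<or> J k = -1"
    and "\<forall>k\<in>{1..m-1}. \<zeta> k \<in> PminusN N"
    and "f \<in> PplusN N" and "poly_at_zero_nonzero f"
    and "\<forall>i\<in>{1..m}. u i \<in> PplusN N"
    and "\<forall>i\<in>{1..m}. v i \<in> PplusN N"
    and "is_solution m J \<zeta> f u" and "is_solution m J \<zeta> f v"
  shows "\<exists>c. \<forall>z\<in>circle.
    (\<Sum>k=1..m-1. of_int (J k) * u k z * tilde (v k) z) + tilde (u m) z * v m z = c"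
proof -
  have m: "m \<ge> 1" using assms(1) by simp
  have u: "\<forall>i\<in>{1..m}. u i \<in> Pplus" using assms(7) by (simp add: PplusN_def)
  have v: "\<forall>i\<in>{1..m}. v i \<in> Pplus" using assms(8) by (simp add: PplusN_def)
  obtain n p where fp: "\<forall>z\<in>circle. f z = (\<Sum>k\<le>n. p k * z ^ k)" and p0: "p 0 \<noteq> 0"
    using assms(6) by (auto simp: poly_at_zero_nonzero_def)
  define F where "F = (\<Sum>k\<le>n. monom (p k) k)"
  have fF: "\<forall>z\<in>circle. f z = poly F z" using fp by (simp add: F_def poly_sum poly_monom)
  have "poly F 0 = (\<Sum>k\<le>n. p k * 0 ^ k)" by (simp add: F_def poly_sum poly_monom)
  also have "\<dots> = p 0" by (simp add: zero_power sum.atMost_shift)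
  finally have F0: "poly F 0 \<noteq> 0" using p0 by simp
  have ex: "\<exists>R. \<forall>z\<in>circle. SS m J x y z = poly R z"
    if x: "\<forall>i\<in>{1..m}. x i \<in> Pplus" and y: "\<forall>i\<in>{1..m}. y i \<in> Pplus"
      and sx: "is_solution m J \<zeta> f x" and sy: "is_solution m J \<zeta> f y" for x y
  proof -
    obtain M T where MT: "\<forall>z\<in>circle. z^M * SS m J x y z = poly T z"
      using lpoly_S[OF m x y, of J] by (auto simp: lpoly_def)
    obtain P where P: "\<forall>z\<in>circle. f z * SS m J x y z = poly P z"
      using fS_Pplus[OF m x y sx sy] by (auto simp: Pplus_iff)
    show ?thesis by (rule core[OF MT fF F0 P])
  qed
  obtain A where A: "\<forall>z\<in>circle. SS m J u v z = poly A z" using ex[OF u v assms(9,10)] by blast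
  obtain B where B: "\<forall>z\<in>circle. SS m J v u z = poly B z" using ex[OF v u assms(10,9)] by blast
  have "\<forall>z\<in>circle. cnj (SS m J u v z) = poly B z" using B SS_sym by metis
  then obtain c where "\<forall>z\<in>circle. SS m J u v z = c" using final[OF A] by blast
  then show ?thesis by (auto simp: SS_def tilde_def)
qed

end
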